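(* Let $m\ge 2$, $k\ge 1$, $N=m^k$, and let $\mathbb{F}_q$ be a finite field with $m\mid q-1$ and $\rho\in\mathbb{F}_q$ a primitive $m$-th root of unity. For $i\in\{1,\ldots,k\}$ let $\mathbf{V}_i$ be the $N\times m^{k-1}$ matrix whose columns are the elements of $\mathcal{V}_i=\left\{\prod_{s=1,s\ne i}^{k}\mathbf{X}_s^{x_s}\mathbf{w} : x_s\in\{0,1,\ldots,m-1\}\right\}$. Then for any $i,j\in\{1,\ldots,k\}$, $$\mathrm{rank}\big([\mathbf{V}_i\ \ \mathbf{X}_j\mathbf{V}_i\ \ \mathbf{X}_j^2\mathbf{V}_i\ \cdots\ \mathbf{X}_j^{m-1}\mathbf{V}_i]\big)=\Big|\bigcup_{l=0}^{m-1}\mathcal{L}(\mathbf{X}_j^l\mathbf{V}_i)\Big|=\begin{cases}m^k,& i=j,\\ m^{k-1},& i\ne j.\end{cases}$$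
   Context: For $s\in\{1,\ldots,k\}$, $\mathbf{X}_s=\mathbf{I}_{m^{s-1}}\otimes\mathrm{blkdiag}\big(\mathbf{I}_{N/m^s},\rho\mathbf{I}_{N/m^s},\ldots,\rho^{m-1}\mathbf{I}_{N/m^s}\big)$, an $N\times N$ diagonal matrix with $\mathbf{X}_s^m=\mathbf{I}_N$; $\otimes$ is the Kronecker product; $\mathbf{w}$ is the all-ones vector of length $N$. Lattice representation: every matrix whose columns are vectors $\prod_{s=1}^k\mathbf{X}_s^{x_s}\mathbf{w}$ with $(x_1,\ldots,x_k)\in\{0,\ldots,m-1\}^k$ is mapped by $\mathcal{L}$ to the set of exponent vectors of its columns (exponents mod $m$); so $\mathcal{L}(\mathbf{X}_j^l\mathbf{V}_i)=\{x+l e_j \bmod m : x\in\mathcal{L}(\mathbf{V}_i)\}$. *)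

theory Defs
  imports "Jordan_Normal_Form.DL_Rank" "HOL-Library.FuncSet"
begin

text \<open>Rows/columns are indexed from 0.  Row r of an N x N matrix, N = m^k, lies in
  block number (r div m^(k-s)) mod m of the s-th Kronecker level.\<close>

definition digit :: "nat \<Rightarrow> nat \<Rightarrow> nat \<Rightarrow> nat \<Rightarrow> nat" where
  "digit m k s r = (r div m ^ (k - s)) mod m"

text \<open>X_s = I_{m^(s-1)} (x) blkdiag(I, rho I, ..., rho^(m-1) I), blocks of size N/m^s.\<close>
definition Xmat :: "'a::field \<Rightarrow> nat \<Rightarrow> nat \<Rightarrow> nat \<Rightarrow> 'a mat" where
  "Xmat \<rho> m k s = mat (m ^ k) (m ^ k)
     (\<lambda>(r, c). if r = c then \<rho> ^ digit m k s r else 0)"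

definition wvec :: "nat \<Rightarrow> nat \<Rightarrow> 'a::field vec" where
  "wvec m k = vec (m ^ k) (\<lambda>_. 1)"

definition colvec :: "'a::field \<Rightarrow> nat \<Rightarrow> nat \<Rightarrow> nat \<Rightarrow> (nat \<Rightarrow> nat) \<Rightarrow> 'a vec" where
  "colvec \<rho> m k i x =
     foldr (\<lambda>s M. M * (Xmat \<rho> m k s ^\<^sub>m x s)) (filter (\<lambda>s. s \<noteq> i) [1..<k+1]) (1\<^sub>m (m ^ k))
       *\<^sub>v wvec m k"

text \<open>Enumeration of the exponent tuples (x_s)_{s ~= i} in {0..m-1}^(k-1):
  t < m^(k-1) is written in base m, its digits assigned to the indices s ~= i.\<close>
definition enum_exp :: "nat \<Rightarrow> nat \<Rightarrow> nat \<Rightarrow> nat \<Rightarrow> (nat \<Rightarrow> nat)" where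
  "enum_exp m k i t = (\<lambda>s. if s \<in> {1..k} \<and> s \<noteq> i
       then (t div m ^ (if s < i then s - 1 else s - 2)) mod m else 0)"

definition Vmat :: "'a::field \<Rightarrow> nat \<Rightarrow> nat \<Rightarrow> nat \<Rightarrow> 'a mat" where
  "Vmat \<rho> m k i = mat_of_cols (m ^ k)
     (map (\<lambda>t. colvec \<rho> m k i (enum_exp m k i t)) [0..<m ^ (k - 1)])"

definition bigmat :: "'a::field \<Rightarrow> nat \<Rightarrow> nat \<Rightarrow> nat \<Rightarrow> nat \<Rightarrow> 'a mat" where
  "bigmat \<rho> m k i j = mat_of_cols (m ^ k)
     (concat (map (\<lambda>l. cols (Xmat \<rho> m k j ^\<^sub>m l * Vmat \<rho> m k i)) [0..<m]))"

text \<open>Lattice representation: exponent vectors (functions on {1..k}, values mod m).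
  L(V_i) = {x : x_i = 0}, and L(X_j^l V) = {x + l e_j mod m : x in L(V)}.\<close>
definition Lat_V :: "nat \<Rightarrow> nat \<Rightarrow> nat \<Rightarrow> (nat \<Rightarrow> nat) set" where
  "Lat_V m k i = {x \<in> {1..k} \<rightarrow>\<^sub>E {..<m}. x i = 0}"

definition Lat_shift :: "nat \<Rightarrow> nat \<Rightarrow> nat \<Rightarrow> (nat \<Rightarrow> nat) set \<Rightarrow> (nat \<Rightarrow> nat) set" where
  "Lat_shift m j l L = (\<lambda>x. x(j := (x j + l) mod m)) ` L"

end

theory Submission
  imports Defs "HOL-Computational_Algebra.Primes"
begin



lemma digits_inj:
  fixes m :: nat
  assumes "m > 0"
  shows "t < m^n \<Longrightarrow> t' < m^n \<Longrightarrow> (\<forall>p<n. t div m^p mod m = t' div m^p mod m) \<Longrightarrow> t = t'"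
proof (induction n arbitrary: t t')
  case 0
  then show ?case by simp
next
  case (Suc n)
  have "t div m < m^n" "t' div m < m^n"
    using Suc.prems(1,2) by (simp_all add: less_mult_imp_div_less mult.commute)
  moreover have "\<forall>p<n. t div m div m^p mod m = t' div m div m^p mod m"
  proof (intro allI impI)
    fix p assume "p < n"
    then have "t div m^(Suc p) mod m = t' div m^(Suc p) mod m" using Suc.prems(3) by auto
    then show "t div m div m^p mod m = t' div m div m^p mod m"
      by (simp add: div_mult2_eq)
  qed
  ultimately have "t div m = t' div m" using Suc.IH by blast
  moreover have "t mod m = t' mod m" using Suc.prems(3)[rule_format, of 0] by simp
  ultimately show ?case by (metis div_mult_mod_eq)
qed

lemma rho_pow_mod:
  fixes \<rho> :: "'a::field"
  assumes "\<rho> ^ m = 1"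
  shows "\<rho> ^ a = \<rho> ^ (a mod m)"
proof -
  have "\<rho> ^ a = \<rho> ^ (m * (a div m) + a mod m)" by simp
  also have "\<dots> = (\<rho>^m)^(a div m) * \<rho> ^ (a mod m)" by (simp only: power_add power_mult)
  finally show ?thesis using assms by simp
qed

lemma geom_zero:
  fixes \<rho> :: "'a::field"
  assumes "\<rho> ^ m = 1" and prim: "\<forall>t. 0 < t \<and> t < m \<longrightarrow> \<rho> ^ t \<noteq> 1"
    and "a mod m \<noteq> 0"
  shows "(\<Sum>d<m. \<rho> ^ (a * d)) = 0"
proof -
  show ?thesis
  proof (cases "m = 0")
    case True then show ?thesis by simp
  next
    case False
  then have m0: "m > 0" by simp
  let ?y = "\<rho> ^ a"
  have "?y = \<rho> ^ (a mod m)" using rho_pow_mod[OF assms(1)] .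
  then have y1: "?y \<noteq> 1" using prim assms(3) m0 by auto
  have "?y ^ m = 1" using assms(1) by (metis power_mult mult.commute power_one)
  then have "(?y - 1) * (\<Sum>d<m. ?y ^ d) = 0" using power_diff_1_eq[of ?y m] by simp
  then have "(\<Sum>d<m. ?y ^ d) = 0" using y1 by simp
  then show ?thesis by (simp add: power_mult)
qed
qed

lemma m_nonzero:
  fixes \<rho> :: "'a::field"
  assumes "\<rho> ^ m = 1" and prim: "\<forall>t. 0 < t \<and> t < m \<longrightarrow> \<rho> ^ t \<noteq> 1" and "m > 0"
  shows "(of_nat m :: 'a) \<noteq> 0"
proof
  assume h: "(of_nat m :: 'a) = 0"
  then have cpos: "CHAR('a) > 0" using CHAR_pos_iff assms(3) by blast
  define p where "p = CHAR('a)"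
  have pp: "prime p" using prime_CHAR_semidom[OF cpos] p_def by simp
  have "p dvd m" using h of_nat_eq_0_iff_char_dvd p_def by blast
  then obtain m' where m': "m = p * m'" by blast
  have p2: "p \<ge> 2" using pp prime_ge_2_nat by blast
  have m'pos: "m' > 0" using m' assms(3) by (cases m') auto
  have m'lt: "m' < m" using m' p2 m'pos by (simp add: less_le_trans)
  define y where "y = \<rho> ^ m'"
  have "y ^ p = 1" using assms(1) m' by (simp add: y_def power_mult[symmetric] mult.commute)
  have "(y + (- 1)) ^ p = y ^ p + (- 1) ^ p"
    using freshmans_dream[where ?x=y and ?y="-1" and ?n=p] pp p_def by simp
  also have "(- 1 :: 'a) ^ p = - (1 ^ p)" using minus_power_prime_CHAR[where x="1::'a" and p=p] pp p_def by simp
  finally have "(y - 1) ^ p = 0" using \<open>y ^ p = 1\<close> by simp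
  then have "y = 1" by simp
  then show False using prim m'pos m'lt y_def by auto
qed




definition dg :: "nat \<Rightarrow> (nat \<Rightarrow> 'a::field) \<Rightarrow> 'a mat" where
  "dg n f = mat n n (\<lambda>(r,c). if r = c then f r else 0)"

lemma dg_carrier[simp]: "dg n f \<in> carrier_mat n n" by (simp add: dg_def)
lemma dg_dims[simp]: "dim_row (dg n f) = n" "dim_col (dg n f) = n" by (simp_all add: dg_def)

lemma dg_mult: "dg n f * dg n g = dg n (\<lambda>r. f r * g r)"
proof (rule eq_matI)
  fix r c assume rc: "r < dim_row (dg n (\<lambda>r. f r * g r))" "c < dim_col (dg n (\<lambda>r. f r * g r))"
  have "(dg n f * dg n g) $$ (r, c) = (\<Sum>q = 0..<n. (if r = q then f r else 0) * (if q = c then g q else 0))"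
    using rc by (simp add: dg_def scalar_prod_def)
  also have "\<dots> = (\<Sum>q = 0..<n. if q = r then (if r = c then f r * g r else 0) else 0)"
    by (rule sum.cong) auto
  also have "\<dots> = (if r = c then f r * g r else 0)" using rc by simp
  finally show "(dg n f * dg n g) $$ (r, c) = dg n (\<lambda>r. f r * g r) $$ (r, c)"
    using rc by (simp add: dg_def)
qed auto

lemma one_dg: "1\<^sub>m n = (dg n (\<lambda>_. 1) :: 'a::field mat)"
  by (rule eq_matI) (auto simp: dg_def)

lemma dg_mult_vec: "dg n f *\<^sub>v vec n g = vec n (\<lambda>r. f r * g r)"
proof (rule eq_vecI)
  fix r assume r: "r < dim_vec (vec n (\<lambda>r. f r * g r))"
  have "(dg n f *\<^sub>v vec n g) $ r = (\<Sum>q = 0..<n. (if r = q then f r else 0) * g q)"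
    using r by (simp add: dg_def scalar_prod_def)
  also have "\<dots> = (\<Sum>q = 0..<n. if q = r then f r * g r else 0)"
    by (rule sum.cong) auto
  also have "\<dots> = f r * g r" using r by simp
  finally show "(dg n f *\<^sub>v vec n g) $ r = vec n (\<lambda>r. f r * g r) $ r" using r by simp
qed (simp add: dg_def)

lemma Xmat_dg: "Xmat \<rho> m k s = dg (m^k) (\<lambda>r. \<rho> ^ digit m k s r)"
  by (simp add: Xmat_def dg_def)

lemma Xpow: "Xmat \<rho> m k s ^\<^sub>m a = dg (m^k) (\<lambda>r. \<rho> ^ (a * digit m k s r))"
proof (induction a)
  case 0
  then show ?case by (simp add: Xmat_dg one_dg)
next
  case (Suc a)
  then show ?case by (simp add: Xmat_dg dg_mult power_add mult.commute)
qed

lemma fold_dg: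
  "foldr (\<lambda>s M. M * (Xmat \<rho> m k s ^\<^sub>m x s)) L (1\<^sub>m (m ^ k))
     = dg (m^k) (\<lambda>r. prod_list (map (\<lambda>s. \<rho> ^ (x s * digit m k s r)) L))"
proof (induction L)
  case Nil
  then show ?case by (simp add: one_dg)
next
  case (Cons a L)
  then show ?case by (simp add: Xpow dg_mult mult.commute)
qed

definition chi :: "'a::field \<Rightarrow> nat \<Rightarrow> nat \<Rightarrow> (nat \<Rightarrow> nat) \<Rightarrow> 'a vec" where
  "chi \<rho> m k e = vec (m^k) (\<lambda>r. \<rho> ^ (\<Sum>s\<in>{1..k}. e s * digit m k s r))"

lemma chi_carrier[simp]: "chi \<rho> m k e \<in> carrier_vec (m^k)" by (simp add: chi_def)

lemma colvec_eq: "colvec \<rho> m k i x = vec (m^k) (\<lambda>r. \<rho> ^ (\<Sum>s\<in>{1..k}-{i}. x s * digit m k s r))"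
proof -
  have set: "set (filter (\<lambda>s. s \<noteq> i) [1..<k+1]) = {1..k} - {i}" by auto
  have d: "distinct (filter (\<lambda>s. s \<noteq> i) [1..<k+1])" by simp
  have "colvec \<rho> m k i x = vec (m^k) (\<lambda>r. prod_list (map (\<lambda>s. \<rho> ^ (x s * digit m k s r)) (filter (\<lambda>s. s \<noteq> i) [1..<k+1])))"
    unfolding colvec_def fold_dg wvec_def dg_mult_vec by simp
  also have "\<dots> = vec (m^k) (\<lambda>r. \<Prod>s\<in>{1..k}-{i}. \<rho> ^ (x s * digit m k s r))"
    unfolding prod.distinct_set_conv_list[OF d, symmetric] set by simp
  finally show ?thesis by (simp add: power_sum)
qed

lemma col_eq:
  assumes "i \<in> {1..k}" "j \<in> {1..k}"
  shows "Xmat \<rho> m k j ^\<^sub>m l *\<^sub>v colvec \<rho> m k i x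
     = chi \<rho> m k (\<lambda>s. (if s = i then 0 else x s) + (if s = j then l else 0))"
proof -
  have "(\<Sum>s\<in>{1..k}. ((if s = i then 0 else x s) + (if s = j then l else 0)) * digit m k s r)
        = l * digit m k j r + (\<Sum>s\<in>{1..k}-{i}. x s * digit m k s r)" for r
  proof -
    have "(\<Sum>s\<in>{1..k}. ((if s = i then 0 else x s) + (if s = j then l else 0)) * digit m k s r)
      = (\<Sum>s\<in>{1..k}. (if s = i then 0 else x s * digit m k s r)) + (\<Sum>s\<in>{1..k}. (if s = j then l * digit m k s r else 0))"
      by (subst sum.distrib[symmetric], rule sum.cong) (auto simp: distrib_right)
    also have "(\<Sum>s\<in>{1..k}. (if s = j then l * digit m k s r else 0)) = l * digit m k j r"
      using assms by simp
    also have "(\<Sum>s\<in>{1..k}. (if s = i then 0 else x s * digit m k s r)) = (\<Sum>s\<in>{1..k}-{i}. x s * digit m k s r)"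
      using assms by (subst sum.remove[where x=i]) (auto intro!: sum.cong)
    finally show ?thesis by simp
  qed
  then show ?thesis
    unfolding colvec_eq Xpow dg_mult_vec chi_def by (simp add: power_add)
qed

lemma cols_mult_set:
  assumes "A \<in> carrier_mat n n" "B \<in> carrier_mat n nc"
  shows "set (cols (A * B)) = (\<lambda>v. A *\<^sub>v v) ` set (cols B)"
proof -
  have dc: "dim_col (A * B) = nc" "dim_col B = nc" using assms by auto
  have "set (cols (A * B)) = col (A * B) ` {0..<nc}" unfolding cols_def dc by simp
  also have "\<dots> = (\<lambda>c. A *\<^sub>v col B c) ` {0..<nc}"
    by (rule image_cong[OF refl], rule col_mult2[OF assms]) simp
  also have "\<dots> = (\<lambda>v. A *\<^sub>v v) ` set (cols B)" unfolding cols_def dc by (simp add: image_image)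
  finally show ?thesis .
qed




lemma colvec_carrier[simp]: "colvec \<rho> m k i x \<in> carrier_vec (m^k)"
  by (simp add: colvec_eq)

lemma Vmat_carrier: "Vmat \<rho> m k i \<in> carrier_mat (m^k) (m^(k-1))"
proof -
  have "mat_of_cols (m^k) (map (\<lambda>t. colvec \<rho> m k i (enum_exp m k i t)) [0..<m ^ (k - 1)])
     \<in> carrier_mat (m^k) (length (map (\<lambda>t. colvec \<rho> m k i (enum_exp m k i t)) [0..<m ^ (k - 1)]))"
    by (rule mat_of_cols_carrier(1))
  then show ?thesis unfolding Vmat_def by simp
qed

lemma cols_Vmat: "set (cols (Vmat \<rho> m k i)) = (\<lambda>t. colvec \<rho> m k i (enum_exp m k i t)) ` {..<m^(k-1)}"
proof -
  have cv: "set (map (\<lambda>t. colvec \<rho> m k i (enum_exp m k i t)) [0..<m ^ (k - 1)]) \<subseteq> carrier_vec (m^k)"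
    by auto
  show ?thesis unfolding Vmat_def cols_mat_of_cols[OF cv] set_map set_upt atLeast0LessThan ..
qed

lemma Xpow_carrier: "Xmat \<rho> m k s ^\<^sub>m l \<in> carrier_mat (m^k) (m^k)"
  by (simp add: Xpow)

lemma image_prod_Union: "(\<lambda>(l,t). f l t) ` (A \<times> B) = (\<Union>l\<in>A. (\<lambda>t. f l t) ` B)"
  by auto

lemma cols_bigmat:
  assumes "i \<in> {1..k}" "j \<in> {1..k}"
  shows "set (cols (bigmat \<rho> m k i j)) = (\<lambda>(l,t). chi \<rho> m k (\<lambda>s. (if s = i then 0 else enum_exp m k i t s) + (if s = j then l else 0))) ` ({..<m} \<times> {..<m^(k-1)})"
proof -
  let ?L = "concat (map (\<lambda>l. cols (Xmat \<rho> m k j ^\<^sub>m l * Vmat \<rho> m k i)) [0..<m])"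
  have pc: "Xmat \<rho> m k j ^\<^sub>m l * Vmat \<rho> m k i \<in> carrier_mat (m^k) (m^(k-1))" for l
    using Xpow_carrier Vmat_carrier by (rule mult_carrier_mat)
  have "set ?L \<subseteq> carrier_vec (m^k)"
  proof
    fix v assume "v \<in> set ?L"
    then obtain l where "v \<in> set (cols (Xmat \<rho> m k j ^\<^sub>m l * Vmat \<rho> m k i))" by auto
    moreover have "set (cols (Xmat \<rho> m k j ^\<^sub>m l * Vmat \<rho> m k i)) \<subseteq> carrier_vec (dim_row (Xmat \<rho> m k j ^\<^sub>m l * Vmat \<rho> m k i))"
      by (rule cols_dim)
    moreover have "dim_row (Xmat \<rho> m k j ^\<^sub>m l * Vmat \<rho> m k i) = m^k"
      using pc[of l] by (rule carrier_matD(1))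
    ultimately show "v \<in> carrier_vec (m^k)" by auto
  qed
  then have "set (cols (bigmat \<rho> m k i j)) = set ?L" unfolding bigmat_def by simp
  also have "\<dots> = (\<Union>l\<in>{..<m}. set (cols (Xmat \<rho> m k j ^\<^sub>m l * Vmat \<rho> m k i)))" by auto
  also have "\<dots> = (\<Union>l\<in>{..<m}. (\<lambda>v. Xmat \<rho> m k j ^\<^sub>m l *\<^sub>v v) ` set (cols (Vmat \<rho> m k i)))"
    by (simp add: cols_mult_set[OF Xpow_carrier Vmat_carrier])
  also have "\<dots> = (\<lambda>(l,t). chi \<rho> m k (\<lambda>s. (if s = i then 0 else enum_exp m k i t s) + (if s = j then l else 0))) ` ({..<m} \<times> {..<m^(k-1)})"
    unfolding cols_Vmat image_image col_eq[OF assms] image_prod_Union ..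
  finally show ?thesis .
qed

lemma chi_mod:
  fixes \<rho> :: "'a::field"
  assumes "\<rho> ^ m = 1" "\<forall>s\<in>{1..k}. e s mod m = e' s mod m"
  shows "chi \<rho> m k e = chi \<rho> m k e'"
proof -
  have modeq: "(\<Sum>s\<in>{1..k}. e s * digit m k s r) mod m = (\<Sum>s\<in>{1..k}. e' s * digit m k s r) mod m" for r
  proof -
    have "(\<Sum>s\<in>{1..k}. e s * digit m k s r) mod m = (\<Sum>s\<in>{1..k}. (e s * digit m k s r) mod m) mod m"
      by (simp add: mod_sum_eq)
    also have "\<dots> = (\<Sum>s\<in>{1..k}. (e' s * digit m k s r) mod m) mod m"
    proof -
      have "(e s * digit m k s r) mod m = (e' s * digit m k s r) mod m" if "s \<in> {1..k}" for s
      proof -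
        have "(e s * digit m k s r) mod m = ((e s mod m) * digit m k s r) mod m" by (simp add: mod_mult_left_eq)
        also have "\<dots> = ((e' s mod m) * digit m k s r) mod m" using assms(2) that by simp
        also have "\<dots> = (e' s * digit m k s r) mod m" by (simp add: mod_mult_left_eq)
        finally show ?thesis .
      qed
      then have "(\<Sum>s\<in>{1..k}. (e s * digit m k s r) mod m) = (\<Sum>s\<in>{1..k}. (e' s * digit m k s r) mod m)"
        by (intro sum.cong refl) blast
      then show ?thesis by simp
    qed
    also have "\<dots> = (\<Sum>s\<in>{1..k}. e' s * digit m k s r) mod m"
      by (simp add: mod_sum_eq)
    finally show ?thesis .
  qed
  then have "\<rho> ^ (\<Sum>s\<in>{1..k}. e s * digit m k s r) = \<rho> ^ (\<Sum>s\<in>{1..k}. e' s * digit m k s r)" for r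
  proof -
    have "\<rho> ^ (\<Sum>s\<in>{1..k}. e s * digit m k s r) = \<rho> ^ ((\<Sum>s\<in>{1..k}. e s * digit m k s r) mod m)"
      by (rule rho_pow_mod[OF assms(1)])
    also have "\<dots> = \<rho> ^ ((\<Sum>s\<in>{1..k}. e' s * digit m k s r) mod m)"
      using modeq[of r] by simp
    also have "\<dots> = \<rho> ^ (\<Sum>s\<in>{1..k}. e' s * digit m k s r)"
      by (rule rho_pow_mod[OF assms(1), symmetric])
    finally show ?thesis .
  qed
  then show ?thesis unfolding chi_def by simp
qed




lemma R_in:
  assumes "m > 0" "i \<in> {1..k}"
  shows "restrict (enum_exp m k i t) {1..k} \<in> Lat_V m k i"
  using assms by (auto simp: Lat_V_def enum_exp_def)

lemma R_inj:
  assumes "m > 0" "i \<in> {1..k}"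
  shows "inj_on (\<lambda>t. restrict (enum_exp m k i t) {1..k}) {..<m^(k-1)}"
proof
  fix t t' assume t: "t \<in> {..<m^(k-1)}" and t': "t' \<in> {..<m^(k-1)}"
    and eq: "restrict (enum_exp m k i t) {1..k} = restrict (enum_exp m k i t') {1..k}"
  have "\<forall>p<k-1. t div m^p mod m = t' div m^p mod m"
  proof (intro allI impI)
    fix p assume p: "p < k - 1"
    define s where "s = (if p+1 < i then p+1 else p+2)"
    have sK: "s \<in> {1..k}" "s \<noteq> i" using p assms(2) by (auto simp: s_def)
    have sp: "(if s < i then s - 1 else s - 2) = p" by (auto simp: s_def)
    have "restrict (enum_exp m k i t) {1..k} s = restrict (enum_exp m k i t') {1..k} s"
      using eq by simp
    then show "t div m^p mod m = t' div m^p mod m"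
      using sK sp by (simp add: enum_exp_def)
  qed
  then show "t = t'" using digits_inj[OF assms(1)] t t' by auto
qed

lemma card_PiE_m: "card (PiE A (\<lambda>_. {..<m::nat})) = m ^ card A" if "finite A"
  using that by (simp add: card_PiE)

lemma Lat_V_image:
  assumes "i \<in> {1..k}" "m > 0"
  shows "Lat_V m k i = (\<lambda>x. x(i:=0)) ` PiE ({1..k}-{i}) (\<lambda>_. {..<m})"
proof
  show "Lat_V m k i \<subseteq> (\<lambda>x. x(i:=0)) ` PiE ({1..k}-{i}) (\<lambda>_. {..<m})"
  proof
    fix x assume x: "x \<in> Lat_V m k i"
    then have "x = (restrict x ({1..k}-{i}))(i := 0)"
      by (auto simp: Lat_V_def PiE_def extensional_def)
    moreover have "restrict x ({1..k}-{i}) \<in> PiE ({1..k}-{i}) (\<lambda>_. {..<m})"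
      using x by (auto simp: Lat_V_def)
    ultimately show "x \<in> (\<lambda>x. x(i:=0)) ` PiE ({1..k}-{i}) (\<lambda>_. {..<m})" by blast
  qed
  show "(\<lambda>x. x(i:=0)) ` PiE ({1..k}-{i}) (\<lambda>_. {..<m}) \<subseteq> Lat_V m k i"
    using assms by (auto simp: Lat_V_def PiE_def extensional_def)
qed

lemma card_Lat_V:
  assumes "i \<in> {1..k}" "m > 0"
  shows "card (Lat_V m k i) = m ^ (k-1)"
proof -
  have inj: "inj_on (\<lambda>x. x(i:=0)) (PiE ({1..k}-{i}) (\<lambda>_. {..<m}))"
  proof
    fix x y assume x: "x \<in> PiE ({1..k}-{i}) (\<lambda>_. {..<m})" and y: "y \<in> PiE ({1..k}-{i}) (\<lambda>_. {..<m})"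
      and eq: "x(i:=0) = y(i:=0)"
    have "x i = y i" using x y by (auto simp: PiE_def extensional_def)
    then show "x = y" using eq by (metis fun_upd_triv fun_upd_upd)
  qed
  have "card (Lat_V m k i) = card (PiE ({1..k}-{i}) (\<lambda>_. {..<m}))"
    unfolding Lat_V_image[OF assms] by (rule card_image[OF inj])
  also have "\<dots> = m ^ (k-1)" using assms(1) by (simp add: card_PiE_m)
  finally show ?thesis .
qed

lemma R_image:
  assumes "i \<in> {1..k}" "m > 0"
  shows "(\<lambda>t. restrict (enum_exp m k i t) {1..k}) ` {..<m^(k-1)} = Lat_V m k i"
proof (rule card_subset_eq)
  show "finite (Lat_V m k i)" unfolding Lat_V_def by (rule finite_subset[of _ "PiE {1..k} (\<lambda>_. {..<m})"]) (auto intro: finite_PiE)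
  show "(\<lambda>t. restrict (enum_exp m k i t) {1..k}) ` {..<m^(k-1)} \<subseteq> Lat_V m k i"
    using R_in[OF assms(2,1)] by auto
  show "card ((\<lambda>t. restrict (enum_exp m k i t) {1..k}) ` {..<m^(k-1)}) = card (Lat_V m k i)"
    using card_image[OF R_inj[OF assms(2,1)]] card_Lat_V[OF assms] by simp
qed

lemma U_sub:
  assumes "j \<in> {1..k}" "m > 0"
  shows "(\<Union>l\<in>{0..<m}. Lat_shift m j l (Lat_V m k i)) \<subseteq> PiE {1..k} (\<lambda>_. {..<m})"
  using assms by (auto simp: Lat_shift_def Lat_V_def PiE_def extensional_def)

lemma U_eq_same:
  assumes "i \<in> {1..k}" "m > 0"
  shows "(\<Union>l\<in>{0..<m}. Lat_shift m i l (Lat_V m k i)) = PiE {1..k} (\<lambda>_. {..<m})"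
proof
  show "(\<Union>l\<in>{0..<m}. Lat_shift m i l (Lat_V m k i)) \<subseteq> PiE {1..k} (\<lambda>_. {..<m})"
    using U_sub[OF assms] .
  show "PiE {1..k} (\<lambda>_. {..<m}) \<subseteq> (\<Union>l\<in>{0..<m}. Lat_shift m i l (Lat_V m k i))"
  proof
    fix y assume y: "y \<in> PiE {1..k} (\<lambda>_. {..<m})"
    have yi: "y i < m" using y assms by auto
    have "y(i:=0) \<in> Lat_V m k i" using y assms by (auto simp: Lat_V_def PiE_def extensional_def)
    moreover have "y = (y(i:=0))(i := ((y(i:=0)) i + y i) mod m)" using yi by simp
    ultimately have "y \<in> Lat_shift m i (y i) (Lat_V m k i)" unfolding Lat_shift_def by blast
    then show "y \<in> (\<Union>l\<in>{0..<m}. Lat_shift m i l (Lat_V m k i))" using yi by auto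
  qed
qed

lemma U_eq_diff:
  assumes "i \<in> {1..k}" "j \<in> {1..k}" "i \<noteq> j" "m > 0"
  shows "(\<Union>l\<in>{0..<m}. Lat_shift m j l (Lat_V m k i)) = Lat_V m k i"
proof
  show "(\<Union>l\<in>{0..<m}. Lat_shift m j l (Lat_V m k i)) \<subseteq> Lat_V m k i"
    using assms by (auto simp: Lat_shift_def Lat_V_def PiE_def extensional_def)
  show "Lat_V m k i \<subseteq> (\<Union>l\<in>{0..<m}. Lat_shift m j l (Lat_V m k i))"
  proof
    fix x assume x: "x \<in> Lat_V m k i"
    then have "x j < m" using assms by (auto simp: Lat_V_def)
    then have "x = x(j := (x j + 0) mod m)" by simp
    then have "x \<in> Lat_shift m j 0 (Lat_V m k i)" using x unfolding Lat_shift_def by blast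
    then show "x \<in> (\<Union>l\<in>{0..<m}. Lat_shift m j l (Lat_V m k i))" using assms by auto
  qed
qed

lemma card_U:
  assumes "i \<in> {1..k}" "j \<in> {1..k}" "m > 0"
  shows "card (\<Union>l\<in>{0..<m}. Lat_shift m j l (Lat_V m k i)) = (if i = j then m ^ k else m ^ (k - 1))"
  using assms U_eq_same U_eq_diff card_Lat_V by (auto simp: card_PiE_m)




lemma D_in: "restrict (\<lambda>s. digit m k s r) {1..k} \<in> PiE {1..k} (\<lambda>_. {..<m::nat})" if "m > 0"
  using that by (auto simp: digit_def)

lemma D_inj:
  assumes "m > 0"
  shows "inj_on (\<lambda>r. restrict (\<lambda>s. digit m k s r) {1..k}) {..<m^k}"
proof
  fix r r' assume r: "r \<in> {..<m^k}" and r': "r' \<in> {..<m^k}"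
    and eq: "restrict (\<lambda>s. digit m k s r) {1..k} = restrict (\<lambda>s. digit m k s r') {1..k}"
  have "\<forall>p<k. r div m^p mod m = r' div m^p mod m"
  proof (intro allI impI)
    fix p assume p: "p < k"
    have "restrict (\<lambda>s. digit m k s r) {1..k} (k - p) = restrict (\<lambda>s. digit m k s r') {1..k} (k - p)"
      using eq by simp
    moreover have "Suc 0 \<le> k - p" "k - (k - p) = p" using p by auto
    ultimately show "r div m^p mod m = r' div m^p mod m" by (simp add: digit_def)
  qed
  then show "r = r'" using digits_inj[OF assms] r r' by auto
qed

lemma D_image:
  assumes "m > 0"
  shows "(\<lambda>r. restrict (\<lambda>s. digit m k s r) {1..k}) ` {..<m^k} = PiE {1..k} (\<lambda>_. {..<m})"
proof (rule card_subset_eq)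
  show "finite (PiE {1..k} (\<lambda>_. {..<m}))" by (rule finite_PiE) auto
  show "(\<lambda>r. restrict (\<lambda>s. digit m k s r) {1..k}) ` {..<m^k} \<subseteq> PiE {1..k} (\<lambda>_. {..<m})"
    using assms by (auto simp: digit_def)
  show "card ((\<lambda>r. restrict (\<lambda>s. digit m k s r) {1..k}) ` {..<m^k}) = card (PiE {1..k} (\<lambda>_. {..<m}))"
    using card_image[OF D_inj[OF assms]] by (simp add: card_PiE_m)
qed

lemma sum_rows:
  fixes f :: "nat \<Rightarrow> nat \<Rightarrow> 'a::field"
  assumes "m > 0"
  shows "(\<Sum>r<m^k. \<Prod>s\<in>{1..k}. f s (digit m k s r)) = (\<Prod>s\<in>{1..k}. \<Sum>d<m. f s d)"
proof -
  let ?D = "\<lambda>r. restrict (\<lambda>s. digit m k s r) {1..k}"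
  let ?g = "\<lambda>d. \<Prod>s\<in>{1..k}. f s (d s)"
  have "(\<Sum>r<m^k. \<Prod>s\<in>{1..k}. f s (digit m k s r)) = (\<Sum>r<m^k. ?g (?D r))"
    by (intro sum.cong refl prod.cong) auto
  also have "\<dots> = (\<Sum>d\<in>?D ` {..<m^k}. ?g d)"
    by (rule sum.reindex[OF D_inj[OF assms], symmetric, unfolded comp_def])
  also have "\<dots> = (\<Sum>d\<in>PiE {1..k} (\<lambda>_. {..<m}). ?g d)" unfolding D_image[OF assms] ..
  also have "\<dots> = (\<Prod>s\<in>{1..k}. \<Sum>d<m. f s d)" by (rule prod_sum_PiE[symmetric]) auto
  finally show ?thesis .
qed

lemma ortho:
  fixes \<rho> :: "'a::field"
  assumes "\<rho> ^ m = 1" and prim: "\<forall>t. 0 < t \<and> t < m \<longrightarrow> \<rho> ^ t \<noteq> 1" and m0: "m > 0"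
    and e: "e \<in> PiE {1..k} (\<lambda>_. {..<m})" and e': "e' \<in> PiE {1..k} (\<lambda>_. {..<m})"
  shows "(\<Sum>r<m^k. chi \<rho> m k e $ r * chi \<rho> m k (\<lambda>s. m - e' s) $ r)
         = (if e = e' then of_nat m ^ k else 0)"
proof -
  have "(\<Sum>r<m^k. chi \<rho> m k e $ r * chi \<rho> m k (\<lambda>s. m - e' s) $ r)
     = (\<Sum>r<m^k. \<Prod>s\<in>{1..k}. \<rho> ^ ((e s + (m - e' s)) * digit m k s r))"
  proof (intro sum.cong refl)
    fix r assume "r \<in> {..<m^k}"
    then have "chi \<rho> m k e $ r * chi \<rho> m k (\<lambda>s. m - e' s) $ r
        = \<rho> ^ ((\<Sum>s\<in>{1..k}. e s * digit m k s r) + (\<Sum>s\<in>{1..k}. (m - e' s) * digit m k s r))"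
      by (simp add: chi_def power_add)
    also have "\<dots> = \<rho> ^ (\<Sum>s\<in>{1..k}. (e s + (m - e' s)) * digit m k s r)"
      by (simp only: sum.distrib[symmetric] distrib_right)
    finally show "chi \<rho> m k e $ r * chi \<rho> m k (\<lambda>s. m - e' s) $ r
        = (\<Prod>s\<in>{1..k}. \<rho> ^ ((e s + (m - e' s)) * digit m k s r))"
      by (simp add: power_sum)
  qed
  also have "\<dots> = (\<Prod>s\<in>{1..k}. \<Sum>d<m. \<rho> ^ ((e s + (m - e' s)) * d))"
    by (rule sum_rows[OF m0])
  also have "\<dots> = (if e = e' then of_nat m ^ k else 0)"
  proof (cases "e = e'")
    case True
    have "(\<Prod>s\<in>{1..k}. \<Sum>d<m. \<rho> ^ ((e s + (m - e' s)) * d)) = (\<Prod>s\<in>{1..k}. (of_nat m :: 'a))"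
    proof (intro prod.cong refl)
      fix s assume "s \<in> {1..k}"
      then have "e s < m" using e by auto
      then have "(e s + (m - e' s)) = m" using True by simp
      then show "(\<Sum>d<m. \<rho> ^ ((e s + (m - e' s)) * d)) = of_nat m"
        using assms(1) by (simp add: power_mult)
    qed
    then show ?thesis using True by simp
  next
    case False
    then obtain s where s: "s \<in> {1..k}" "e s \<noteq> e' s"
      using e e' by (metis PiE_ext)
    have "e s < m" "e' s < m" using e e' s by auto
    have "(e s + (m - e' s)) mod m \<noteq> 0"
    proof (cases "e s < e' s")
      case True
      then have "e s + (m - e' s) = m - (e' s - e s)" using \<open>e' s < m\<close> by linarith
      moreover have "m - (e' s - e s) < m" "m - (e' s - e s) > 0" using True \<open>e' s < m\<close> by linarith+
      ultimately show ?thesis by simp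
    next
      case False
      then have gt: "e s > e' s" using s(2) by linarith
      then have eq: "e s + (m - e' s) = (e s - e' s) + m" using \<open>e' s < m\<close> by linarith
      have lt: "(e s - e' s) < m" "(e s - e' s) > 0" using gt \<open>e s < m\<close> by linarith+
      have "(e s + (m - e' s)) mod m = ((e s - e' s) + m) mod m" by (simp only: eq)
      also have "\<dots> = (e s - e' s) mod m" by (rule mod_add_self2)
      also have "\<dots> = e s - e' s" using lt by (simp only: mod_less)
      finally show ?thesis using lt by simp
    qed
    then have "(\<Sum>d<m. \<rho> ^ ((e s + (m - e' s)) * d)) = 0"
      using geom_zero[OF assms(1) prim] by blast
    then show ?thesis using False s by (auto intro: prod_zero)
  qed
  finally show ?thesis .
qed




lemma chi_inj:
  fixes \<rho> :: "'a::field"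
  assumes "\<rho> ^ m = 1" and prim: "\<forall>t. 0 < t \<and> t < m \<longrightarrow> \<rho> ^ t \<noteq> 1" and m0: "m > 0"
  shows "inj_on (chi \<rho> m k) (PiE {1..k} (\<lambda>_. {..<m}))"
proof
  fix e e' assume e: "e \<in> PiE {1..k} (\<lambda>_. {..<m})" and e': "e' \<in> PiE {1..k} (\<lambda>_. {..<m})"
    and eq: "chi \<rho> m k e = chi \<rho> m k e'"
  have nz: "(of_nat m :: 'a) ^ k \<noteq> 0" using m_nonzero[OF assms] by simp
  show "e = e'"
  proof (rule ccontr)
    assume "e \<noteq> e'"
    then have "(\<Sum>r<m^k. chi \<rho> m k e $ r * chi \<rho> m k (\<lambda>s. m - e' s) $ r) = 0"
      using ortho[OF assms e e'] by simp
    moreover have "(\<Sum>r<m^k. chi \<rho> m k e' $ r * chi \<rho> m k (\<lambda>s. m - e' s) $ r) = of_nat m ^ k"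
      using ortho[OF assms e' e'] by simp
    ultimately show False using eq nz by simp
  qed
qed

lemma (in vec_space) chi_indep:
  fixes \<rho> :: "'a"
  assumes n: "n = m^k" and "\<rho> ^ m = 1" and prim: "\<forall>t. 0 < t \<and> t < m \<longrightarrow> \<rho> ^ t \<noteq> 1" and m0: "m > 0"
    and T: "T \<subseteq> chi \<rho> m k ` PiE {1..k} (\<lambda>_. {..<m})"
  shows "lin_indpt T"
proof
  assume dep: "lin_dep T"
  have fin: "finite T"
    by (rule finite_subset[OF T]) (auto intro: finite_PiE)
  have car: "T \<subseteq> carrier_vec n" using T n by auto
  from finite_lin_dep[OF fin dep] car obtain a v where a: "lincomb a T = 0\<^sub>v n" "v \<in> T" "a v \<noteq> 0"
    by auto
  obtain e' where e': "e' \<in> PiE {1..k} (\<lambda>_. {..<m})" "v = chi \<rho> m k e'" using T a(2) by auto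
  let ?w = "chi \<rho> m k (\<lambda>s. m - e' s)"
  have nz: "(of_nat m :: 'a) ^ k \<noteq> 0" using m_nonzero[OF assms(2,3,4)] by simp
  have inner: "(\<Sum>r<m^k. x $ r * ?w $ r) = (if x = v then of_nat m ^ k else 0)" if x: "x \<in> T" for x
  proof -
    obtain e where e: "e \<in> PiE {1..k} (\<lambda>_. {..<m})" "x = chi \<rho> m k e" using T x by auto
    show ?thesis
    proof (cases "x = v")
      case True
      then show ?thesis using ortho[OF assms(2,3,4) e'(1) e'(1)] e'(2) by simp
    next
      case False
      then have "e \<noteq> e'" using e e' by auto
      then show ?thesis using ortho[OF assms(2,3,4) e(1) e'(1)] e(2) False by simp
    qed
  qed
  have zero: "(\<Sum>x\<in>T. a x * x $ r) = 0" if r: "r < n" for r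
    using lincomb_index[OF r car, of a] a(1) r by simp
  have "0 = (\<Sum>r<m^k. (\<Sum>x\<in>T. a x * x $ r) * ?w $ r)" using zero n by simp
  also have "\<dots> = (\<Sum>x\<in>T. a x * (\<Sum>r<m^k. x $ r * ?w $ r))"
    unfolding sum_distrib_right by (subst sum.swap) (simp add: sum_distrib_left mult.assoc)
  also have "\<dots> = (\<Sum>x\<in>T. if x = v then a v * of_nat m ^ k else 0)"
    by (intro sum.cong refl) (simp add: inner)
  also have "\<dots> = a v * of_nat m ^ k" using a(2) fin by simp
  finally show False using a(3) nz by simp
qed


lemma cols_bigmat_chi:
  fixes \<rho> :: "'a::field"
  assumes "\<rho> ^ m = 1" "m > 0" "i \<in> {1..k}" "j \<in> {1..k}"
  shows "set (cols (bigmat \<rho> m k i j)) = chi \<rho> m k ` (\<Union>l\<in>{0..<m}. Lat_shift m j l (Lat_V m k i))"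
proof -
  let ?R = "\<lambda>t. restrict (enum_exp m k i t) {1..k}"
  let ?sh = "\<lambda>l x. x(j := (x j + l) mod m)"
  have "(\<lambda>(l,t). ?sh l (?R t)) ` ({..<m} \<times> {..<m^(k-1)}) = (\<Union>l\<in>{..<m}. (\<lambda>t. ?sh l (?R t)) ` {..<m^(k-1)})"
    by (rule image_prod_Union)
  also have "\<dots> = (\<Union>l\<in>{0..<m}. ?sh l ` (?R ` {..<m^(k-1)}))"
    by (simp add: image_image atLeast0LessThan)
  also have "\<dots> = (\<Union>l\<in>{0..<m}. Lat_shift m j l (Lat_V m k i))"
    unfolding R_image[OF assms(3,2)] Lat_shift_def ..
  finally have eqU: "(\<lambda>(l,t). ?sh l (?R t)) ` ({..<m} \<times> {..<m^(k-1)}) = (\<Union>l\<in>{0..<m}. Lat_shift m j l (Lat_V m k i))" .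
  have "set (cols (bigmat \<rho> m k i j)) = (\<lambda>(l,t). chi \<rho> m k (\<lambda>s. (if s = i then 0 else enum_exp m k i t s) + (if s = j then l else 0))) ` ({..<m} \<times> {..<m^(k-1)})"
    by (rule cols_bigmat[OF assms(3,4)])
  also have "\<dots> = (\<lambda>(l,t). chi \<rho> m k (?sh l (?R t))) ` ({..<m} \<times> {..<m^(k-1)})"
  proof (rule image_cong[OF refl])
    fix p assume "p \<in> {..<m} \<times> {..<m^(k-1)}"
    obtain l t where p: "p = (l,t)" by force
    have "chi \<rho> m k (\<lambda>s. (if s = i then 0 else enum_exp m k i t s) + (if s = j then l else 0))
        = chi \<rho> m k (?sh l (?R t))"
      by (rule chi_mod[OF assms(1)]) (use assms(4) in \<open>auto simp: enum_exp_def\<close>)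
    then show "(\<lambda>(l,t). chi \<rho> m k (\<lambda>s. (if s = i then 0 else enum_exp m k i t s) + (if s = j then l else 0))) p
      = (\<lambda>(l,t). chi \<rho> m k (?sh l (?R t))) p" using p by simp
  qed
  also have "\<dots> = chi \<rho> m k ` ((\<lambda>(l,t). ?sh l (?R t)) ` ({..<m} \<times> {..<m^(k-1)}))"
    by (simp add: image_image split_def)
  also have "\<dots> = chi \<rho> m k ` (\<Union>l\<in>{0..<m}. Lat_shift m j l (Lat_V m k i))"
    by (simp only: eqU)
  finally show ?thesis .
qed




lemma (in vec_space) main_rank:
  fixes \<rho> :: "'a"
  assumes n: "n = m^k" and "\<rho> ^ m = 1" and prim: "\<forall>t. 0 < t \<and> t < m \<longrightarrow> \<rho> ^ t \<noteq> 1" and m0: "m > 0"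
    and ij: "i \<in> {1..k}" "j \<in> {1..k}"
  shows "rank (bigmat \<rho> m k i j) = card (\<Union>l\<in>{0..<m}. Lat_shift m j l (Lat_V m k i))"
proof -
  let ?U = "\<Union>l\<in>{0..<m}. Lat_shift m j l (Lat_V m k i)"
  have S: "set (cols (bigmat \<rho> m k i j)) = chi \<rho> m k ` ?U"
    by (rule cols_bigmat_chi[OF assms(2,4) ij])
  have UP: "?U \<subseteq> PiE {1..k} (\<lambda>_. {..<m})" by (rule U_sub[OF ij(2) m0])
  have li: "lin_indpt (set (cols (bigmat \<rho> m k i j)))"
    unfolding S by (rule chi_indep[OF n assms(2,3,4)]) (use UP in auto)
  have dr: "dim_row (bigmat \<rho> m k i j) = n"
    unfolding bigmat_def n by (rule mat_of_cols_carrier(2))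
  have car: "bigmat \<rho> m k i j \<in> carrier_mat n (dim_col (bigmat \<rho> m k i j))"
    using dr by (intro carrier_matI) simp_all
  have max: "maximal (set (cols (bigmat \<rho> m k i j))) (\<lambda>T. T \<subseteq> set (cols (bigmat \<rho> m k i j)) \<and> lin_indpt T)"
    using li unfolding maximal_def by blast
  have "rank (bigmat \<rho> m k i j) = card (set (cols (bigmat \<rho> m k i j)))"
    by (rule rank_card_indpt[OF car max])
  also have "\<dots> = card ?U" unfolding S
    by (rule card_image[OF inj_on_subset[OF chi_inj[OF assms(2,3,4)] UP]])
  finally show ?thesis .
qed


theorem lemma4:
  fixes \<rho> :: "'a::field" and m k i j :: nat
  assumes "finite (UNIV :: 'a set)"
    and "m \<ge> 2" and "k \<ge> 1"
    and "m dvd card (UNIV :: 'a set) - 1"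
    and "\<rho> ^ m = 1" and "\<forall>t. 0 < t \<and> t < m \<longrightarrow> \<rho> ^ t \<noteq> 1"
    and "i \<in> {1..k}" and "j \<in> {1..k}"
  shows "vec_space.rank (m ^ k) (bigmat \<rho> m k i j)
           = card (\<Union>l\<in>{0..<m}. Lat_shift m j l (Lat_V m k i))
       \<and> card (\<Union>l\<in>{0..<m}. Lat_shift m j l (Lat_V m k i))
           = (if i = j then m ^ k else m ^ (k - 1))"
proof
  have m0: "m > 0" using assms(2) by simp
  show "vec_space.rank (m ^ k) (bigmat \<rho> m k i j)
           = card (\<Union>l\<in>{0..<m}. Lat_shift m j l (Lat_V m k i))"
    by (rule vec_space.main_rank[OF refl assms(5,6) m0 assms(7,8)])
  show "card (\<Union>l\<in>{0..<m}. Lat_shift m j l (Lat_V m k i))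
           = (if i = j then m ^ k else m ^ (k - 1))"
    by (rule card_U[OF assms(7,8) m0])
qed

end
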